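(* Let $G$ be a graph, $S\subseteq V(G)$, $k$ an integer, and let $\mathcal{C}$ be the set of all inclusion-wise maximal chips. Any chip $C \in \mathcal{C}$ touches at most $3k \cdot 4^{3k}$ other chips of $\mathcal{C}$.
   Context: $N(C)$ is the set of vertices outside $C$ with a neighbour in $C$. For $X,Y\subseteq V(G)$, a set $W$ is an $X-Y$ separator if no connected component of $G\setminus W$ contains both a vertex of $X$ and a vertex of $Y$. $R_H(Z)$ denotes the set of vertices reachable from $Z$ in $H$. An inclusion-wise minimal $X-Y$ separator $W$ is an important $X-Y$ separator if there is no $X-Y$ separator $W'$ with $|W'|\le|W|$ and $R_{G\setminus W}(X\setminus W)\subsetneq R_{G\setminus W'}(X\setminus W')$. For fixed $S$ and $k$, a set $C\subseteq V(G)$ is a chip if $G[C]$ is connected, $|N(C)|\le 3k$, and $N(C)$ is an important $C-S$ separator. Two distinct chips $C_1,C_2\in\mathcal{C}$ touch if $C_1\cap C_2\neq\emptyset$ or there is an edge with one endpoint in $C_1$ and the other in $C_2$. *)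

theory Defs
  imports Main
begin

definition graph :: "'a set \<Rightarrow> ('a \<Rightarrow> 'a \<Rightarrow> bool) \<Rightarrow> bool" where
  "graph V E \<longleftrightarrow> finite V \<and> (\<forall>u v. E u v \<longrightarrow> E v u) \<and> (\<forall>v. \<not> E v v)
     \<and> (\<forall>u v. E u v \<longrightarrow> u \<in> V \<and> v \<in> V)"

definition reach :: "('a \<Rightarrow> 'a \<Rightarrow> bool) \<Rightarrow> 'a set \<Rightarrow> 'a \<Rightarrow> 'a \<Rightarrow> bool" where
  "reach E A u v \<longleftrightarrow> u \<in> A \<and> (\<lambda>x y. x \<in> A \<and> y \<in> A \<and> E x y)\<^sup>*\<^sup>* u v"

definition nbh :: "'a set \<Rightarrow> ('a \<Rightarrow> 'a \<Rightarrow> bool) \<Rightarrow> 'a set \<Rightarrow> 'a set" where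
  "nbh V E C = {v \<in> V - C. \<exists>u\<in>C. E u v}"

definition connected_set :: "'a set \<Rightarrow> ('a \<Rightarrow> 'a \<Rightarrow> bool) \<Rightarrow> 'a set \<Rightarrow> bool" where
  "connected_set V E C \<longleftrightarrow> C \<subseteq> V \<and> C \<noteq> {} \<and> (\<forall>u\<in>C. \<forall>v\<in>C. reach E C u v)"

definition separator :: "'a set \<Rightarrow> ('a \<Rightarrow> 'a \<Rightarrow> bool) \<Rightarrow> 'a set \<Rightarrow> 'a set \<Rightarrow> 'a set \<Rightarrow> bool" where
  "separator V E X Y W \<longleftrightarrow> W \<subseteq> V \<and> \<not> (\<exists>x\<in>X. \<exists>y\<in>Y. reach E (V - W) x y)"

definition reachable_set :: "'a set \<Rightarrow> ('a \<Rightarrow> 'a \<Rightarrow> bool) \<Rightarrow> 'a set \<Rightarrow> 'a set \<Rightarrow> 'a set" where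
  "reachable_set V E W X = {v. \<exists>x\<in>X - W. reach E (V - W) x v}"

definition min_separator :: "'a set \<Rightarrow> ('a \<Rightarrow> 'a \<Rightarrow> bool) \<Rightarrow> 'a set \<Rightarrow> 'a set \<Rightarrow> 'a set \<Rightarrow> bool" where
  "min_separator V E X Y W \<longleftrightarrow> separator V E X Y W \<and> (\<forall>W'. W' \<subset> W \<longrightarrow> \<not> separator V E X Y W')"

definition important_separator :: "'a set \<Rightarrow> ('a \<Rightarrow> 'a \<Rightarrow> bool) \<Rightarrow> 'a set \<Rightarrow> 'a set \<Rightarrow> 'a set \<Rightarrow> bool" where
  "important_separator V E X Y W \<longleftrightarrow> min_separator V E X Y W \<and>
     \<not> (\<exists>W'. separator V E X Y W' \<and> card W' \<le> card W \<and>
            reachable_set V E W X \<subset> reachable_set V E W' X)"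

definition chip :: "'a set \<Rightarrow> ('a \<Rightarrow> 'a \<Rightarrow> bool) \<Rightarrow> 'a set \<Rightarrow> nat \<Rightarrow> 'a set \<Rightarrow> bool" where
  "chip V E S k C \<longleftrightarrow> connected_set V E C \<and> card (nbh V E C) \<le> 3 * k \<and>
     important_separator V E C S (nbh V E C)"

definition max_chip :: "'a set \<Rightarrow> ('a \<Rightarrow> 'a \<Rightarrow> bool) \<Rightarrow> 'a set \<Rightarrow> nat \<Rightarrow> 'a set \<Rightarrow> bool" where
  "max_chip V E S k C \<longleftrightarrow> chip V E S k C \<and> \<not> (\<exists>C'. chip V E S k C' \<and> C \<subset> C')"

definition touch :: "('a \<Rightarrow> 'a \<Rightarrow> bool) \<Rightarrow> 'a set \<Rightarrow> 'a set \<Rightarrow> bool" where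
  "touch E C1 C2 \<longleftrightarrow> C1 \<noteq> C2 \<and> (C1 \<inter> C2 \<noteq> {} \<or> (\<exists>u\<in>C1. \<exists>v\<in>C2. E u v))"

end

theory Submission
  imports Defs
begin

lemma reach_refl: "u \<in> A \<Longrightarrow> reach E A u u"
  by (simp add: reach_def)

lemma reach_in: "reach E A u v \<Longrightarrow> v \<in> A"
proof -
  assume h: "reach E A u v"
  have "(\<lambda>x y. x \<in> A \<and> y \<in> A \<and> E x y)\<^sup>*\<^sup>* u v" using h by (simp add: reach_def)
  then show "v \<in> A" by (induction rule: rtranclp_induct) (use h in \<open>auto simp: reach_def\<close>)
qed

lemma reach_mono: "reach E A u v \<Longrightarrow> A \<subseteq> B \<Longrightarrow> reach E B u v"
proof -
  assume h: "reach E A u v" and AB: "A \<subseteq> B"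
  have "(\<lambda>x y. x \<in> A \<and> y \<in> A \<and> E x y)\<^sup>*\<^sup>* u v" using h by (simp add: reach_def)
  then have "(\<lambda>x y. x \<in> B \<and> y \<in> B \<and> E x y)\<^sup>*\<^sup>* u v"
    by (rule rtranclp_mono[THEN predicate2D, rotated]) (use AB in auto)
  then show ?thesis using h AB by (auto simp: reach_def)
qed

lemma reach_trans: "reach E A u v \<Longrightarrow> reach E A v w \<Longrightarrow> reach E A u w"
  unfolding reach_def by auto

lemma reach_step: "reach E A u v \<Longrightarrow> E v w \<Longrightarrow> w \<in> A \<Longrightarrow> reach E A u w"
  using reach_in[of E A u v] unfolding reach_def
  by (auto intro: rtranclp.rtrancl_into_rtrancl)

lemma reach_closed:
  assumes "reach E A u v" "u \<in> R" "\<And>a b. a \<in> R \<Longrightarrow> b \<in> A \<Longrightarrow> E a b \<Longrightarrow> b \<in> R"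
  shows "v \<in> R"
proof -
  have "(\<lambda>x y. x \<in> A \<and> y \<in> A \<and> E x y)\<^sup>*\<^sup>* u v" using assms(1) by (simp add: reach_def)
  then show ?thesis
  proof (induction rule: rtranclp_induct)
    case base
    then show ?case using assms(2) .
  next
    case (step y z)
    then show ?case using assms(3)[of y z] by blast
  qed
qed

definition cmp :: "('a \<Rightarrow> 'a \<Rightarrow> bool) \<Rightarrow> 'a set \<Rightarrow> 'a set \<Rightarrow> 'a set" where
  "cmp E A R = {x. \<exists>a\<in>A. reach E R a x}"

lemma reach_comp:
  assumes "reach E R a x" "a \<in> A"
  shows "reach E (cmp E A R) a x"
proof -
  have aR: "a \<in> R" using assms(1) by (simp add: reach_def)
  have "(\<lambda>x y. x \<in> R \<and> y \<in> R \<and> E x y)\<^sup>*\<^sup>* a x" using assms(1) by (simp add: reach_def)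
  then show ?thesis
  proof (induction rule: rtranclp_induct)
    case base
    have "a \<in> cmp E A R" unfolding cmp_def using reach_refl[OF aR] assms(2) by blast
    then show ?case by (rule reach_refl)
  next
    case (step y z)
    have "reach E R a y" using step(1) aR by (simp add: reach_def)
    then have "reach E R a z" using step(2) by (intro reach_step[of E R a y z]) auto
    then have zc: "z \<in> cmp E A R" using assms(2) unfolding cmp_def by blast
    show ?case using step(2) by (intro reach_step[OF step(3) _ zc]) auto
  qed
qed

lemma comp_sub: "cmp E A R \<subseteq> R"
proof
  fix x assume "x \<in> cmp E A R"
  then obtain a where "reach E R a x" unfolding cmp_def by blast
  then show "x \<in> R" by (rule reach_in)
qed

lemma comp_sup: "A \<subseteq> R \<Longrightarrow> A \<subseteq> cmp E A R"
proof
  fix x assume "A \<subseteq> R" "x \<in> A"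
  then have "reach E R x x" by (intro reach_refl) blast
  then show "x \<in> cmp E A R" unfolding cmp_def using \<open>x \<in> A\<close> by blast
qed

lemma nbh_comp: "nbh V E (cmp E A R) \<subseteq> nbh V E R"
proof (rule subsetI)
  fix w assume w: "w \<in> nbh V E (cmp E A R)"
  have wV: "w \<in> V" using w unfolding nbh_def by blast
  have wn: "w \<notin> cmp E A R" using w unfolding nbh_def by blast
  obtain x where xc: "x \<in> cmp E A R" and xw: "E x w" using w unfolding nbh_def by blast
  obtain a where a: "a \<in> A" and ax: "reach E R a x" using xc unfolding cmp_def by blast
  have wR: "w \<notin> R"
  proof
    assume "w \<in> R"
    with ax xw have "reach E R a w" by (rule reach_step)
    with a have "w \<in> cmp E A R" unfolding cmp_def by blast
    with wn show False by simp
  qed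
  have xR: "x \<in> R" by (rule subsetD[OF comp_sub xc])
  show "w \<in> nbh V E R" unfolding nbh_def using wV wR xR xw by blast
qed

lemma nbh_sub: "nbh V E R \<subseteq> V" by (auto simp: nbh_def)

lemma nbh_fin: "finite V \<Longrightarrow> finite (nbh V E R)"
  using finite_subset[OF nbh_sub] by blast

lemma nbhD_fin: "finite V \<Longrightarrow> finite (nbh V E R - D)"
  using nbh_fin by blast

lemma submod:
  assumes "finite V"
  shows "card (nbh V E (R1 \<union> R2) - D) + card (nbh V E (R1 \<inter> R2) - D)
       \<le> card (nbh V E R1 - D) + card (nbh V E R2 - D)"
proof -
  let ?N1 = "nbh V E R1 - D" and ?N2 = "nbh V E R2 - D"
  have f: "finite ?N1" "finite ?N2" by (simp_all add: nbhD_fin[OF assms])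
  have a: "nbh V E (R1 \<union> R2) - D \<subseteq> ?N1 \<union> ?N2" by (auto simp: nbh_def)
  have b: "nbh V E (R1 \<inter> R2) - D \<subseteq> ?N1 \<union> ?N2" by (auto simp: nbh_def)
  have c: "(nbh V E (R1 \<union> R2) - D) \<inter> (nbh V E (R1 \<inter> R2) - D) \<subseteq> ?N1 \<inter> ?N2"
    by (auto simp: nbh_def)
  have fa: "finite (nbh V E (R1 \<union> R2) - D)" "finite (nbh V E (R1 \<inter> R2) - D)"
    by (simp_all add: nbhD_fin[OF assms])
  have "card (nbh V E (R1 \<union> R2) - D) + card (nbh V E (R1 \<inter> R2) - D)
      = card ((nbh V E (R1 \<union> R2) - D) \<union> (nbh V E (R1 \<inter> R2) - D))
        + card ((nbh V E (R1 \<union> R2) - D) \<inter> (nbh V E (R1 \<inter> R2) - D))"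
    using card_Un_Int[OF fa] by simp
  also have "\<dots> \<le> card (?N1 \<union> ?N2) + card (?N1 \<inter> ?N2)"
    using a b c f by (intro add_mono card_mono) auto
  also have "\<dots> = card ?N1 + card ?N2" using card_Un_Int[OF f] by simp
  finally show ?thesis .
qed


definition regs :: "'a set \<Rightarrow> ('a \<Rightarrow> 'a \<Rightarrow> bool) \<Rightarrow> 'a set \<Rightarrow> 'a set \<Rightarrow> 'a set \<Rightarrow> 'a set set" where
  "regs V E S D A = {R. A \<subseteq> R \<and> R \<subseteq> V \<and> R \<inter> (S \<union> D) = {} \<and> (\<forall>x\<in>R. \<exists>a\<in>A. reach E R a x)}"

definition fD :: "'a set \<Rightarrow> ('a \<Rightarrow> 'a \<Rightarrow> bool) \<Rightarrow> 'a set \<Rightarrow> 'a set \<Rightarrow> nat" where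
  "fD V E D R = card (nbh V E R - D)"

definition imp :: "'a set \<Rightarrow> ('a \<Rightarrow> 'a \<Rightarrow> bool) \<Rightarrow> 'a set \<Rightarrow> 'a set \<Rightarrow> 'a set \<Rightarrow> nat \<Rightarrow> 'a set set" where
  "imp V E S D A p = {R \<in> regs V E S D A. fD V E D R \<le> p \<and>
      \<not> (\<exists>R'\<in>regs V E S D A. R \<subset> R' \<and> fD V E D R' \<le> fD V E D R)}"

lemma fD_mono_comp: "finite V \<Longrightarrow> fD V E D (cmp E A R) \<le> fD V E D R"
proof -
  assume fin: "finite V"
  have "nbh V E (cmp E A R) - D \<subseteq> nbh V E R - D" using nbh_comp[of V E A R] by blast
  then show ?thesis unfolding fD_def by (rule card_mono[OF nbhD_fin[OF fin]])
qed

lemma cmp_regs: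
  assumes "A \<subseteq> R" "R \<subseteq> V" "R \<inter> (S \<union> D) = {}"
  shows "cmp E A R \<in> regs V E S D A"
proof -
  have "A \<subseteq> cmp E A R" using comp_sup[OF assms(1)] .
  moreover have "cmp E A R \<subseteq> V" using comp_sub[of E A R] assms(2) by (rule order_trans)
  moreover have "cmp E A R \<inter> (S \<union> D) = {}" using comp_sub[of E A R] assms(3) by blast
  moreover have "\<forall>x\<in>cmp E A R. \<exists>a\<in>A. reach E (cmp E A R) a x"
  proof
    fix x assume "x \<in> cmp E A R"
    then obtain a where a: "a \<in> A" "reach E R a x" unfolding cmp_def by blast
    have "reach E (cmp E A R) a x" using reach_comp[OF a(2) a(1)] .
    then show "\<exists>a\<in>A. reach E (cmp E A R) a x" using a(1) by blast
  qed
  ultimately show ?thesis by (simp add: regs_def)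
qed

lemma sub_lemma:
  assumes fin: "finite V" and "A \<subseteq> R1" "A \<subseteq> R2" "R1 \<subseteq> V" "R2 \<subseteq> V" "R1 \<inter> (S \<union> D) = {}"
    and lb: "\<forall>R\<in>regs V E S D A. l \<le> fD V E D R"
  shows "fD V E D (R1 \<union> R2) + l \<le> fD V E D R1 + fD V E D R2"
proof -
  have "cmp E A (R1 \<inter> R2) \<in> regs V E S D A" using assms(2-6) by (intro cmp_regs) blast+
  then have "l \<le> fD V E D (cmp E A (R1 \<inter> R2))" using lb by blast
  also have "\<dots> \<le> fD V E D (R1 \<inter> R2)" using fD_mono_comp[OF fin] .
  finally show ?thesis using submod[OF fin, of E R1 R2 D] unfolding fD_def by linarith
qed

lemma regs_finite: "finite V \<Longrightarrow> finite (regs V E S D A)"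
proof -
  assume fin: "finite V"
  have "regs V E S D A \<subseteq> Pow V" unfolding regs_def by blast
  moreover have "finite (Pow V)" using fin by simp
  ultimately show ?thesis by (rule finite_subset)
qed

lemma imp_finite: "finite V \<Longrightarrow> finite (imp V E S D A p)"
proof -
  assume fin: "finite V"
  have "imp V E S D A p \<subseteq> regs V E S D A" unfolding imp_def by blast
  then show ?thesis using regs_finite[OF fin] by (rule finite_subset)
qed


lemma main_bound:
  assumes fin: "finite V"
  shows "\<forall>R\<in>regs V E S D A. m \<le> fD V E D R \<Longrightarrow> card (imp V E S D A p) * 2 ^ m \<le> 4 ^ p"
proof (induction "2 * p - m" arbitrary: D A p m rule: less_induct)
  case less
  show ?case
  proof (cases "imp V E S D A p = {}")
    case True then show ?thesis by simp
  next
    case False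
    then obtain R0 where R0: "R0 \<in> imp V E S D A p" by blast
    let ?F = "fD V E D ` regs V E S D A"
    have regsne: "regs V E S D A \<noteq> {}" using R0 by (auto simp: imp_def)
    have finF: "finite ?F" using regs_finite[OF fin] by simp
    define lam where "lam = Min ?F"
    have lam_le: "\<And>R. R \<in> regs V E S D A \<Longrightarrow> lam \<le> fD V E D R"
      unfolding lam_def using finF by (intro Min_le) auto
    have "lam \<in> ?F" unfolding lam_def using finF regsne by (intro Min_in) auto
    then obtain Rm where Rm: "Rm \<in> regs V E S D A" "fD V E D Rm = lam" by auto
    have R0r: "R0 \<in> regs V E S D A" "fD V E D R0 \<le> p" using R0 by (auto simp: imp_def)
    have lamp: "lam \<le> p" using lam_le[OF R0r(1)] R0r(2) by simp
    have mlam: "m \<le> lam" using less.prems Rm by auto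
    define M where "M = {R \<in> regs V E S D A. fD V E D R = lam}"
    have finM: "finite M" using regs_finite[OF fin] by (simp add: M_def)
    have Mne: "M \<noteq> {}" using Rm by (auto simp: M_def)
    define c where "c = Max (card ` M)"
    have "c \<in> card ` M" unfolding c_def using finM Mne by (intro Max_in) auto
    then obtain Rs where Rs: "Rs \<in> M" "card Rs = c" by auto
    have cmax: "card R \<le> card Rs" if "R \<in> M" for R
    proof -
      have "card R \<le> Max (card ` M)" using finM that by (intro Max_ge) auto
      then show ?thesis using Rs(2) c_def by simp
    qed
    have Rsr: "Rs \<in> regs V E S D A" "fD V E D Rs = lam" using Rs by (auto simp: M_def)
    have RsV: "Rs \<subseteq> V" "A \<subseteq> Rs" "Rs \<inter> (S \<union> D) = {}"
      and Rsreach: "\<forall>x\<in>Rs. \<exists>a\<in>A. reach E Rs a x" using Rsr(1) by (auto simp: regs_def)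
    have lb: "\<forall>R\<in>regs V E S D A. lam \<le> fD V E D R" using lam_le by blast
    have un_regs: "R \<union> Rs \<in> regs V E S D A" if "R \<in> regs V E S D A" for R
    proof -
      have "\<forall>x\<in>R \<union> Rs. \<exists>a\<in>A. reach E (R \<union> Rs) a x"
      proof
        fix x assume x: "x \<in> R \<union> Rs"
        have RR: "\<forall>x\<in>R. \<exists>a\<in>A. reach E R a x" using that unfolding regs_def by blast
        show "\<exists>a\<in>A. reach E (R \<union> Rs) a x"
        proof (cases "x \<in> R")
          case True
          then obtain a where a: "a \<in> A" "reach E R a x" using RR by blast
          have "reach E (R \<union> Rs) a x" using reach_mono[OF a(2), of "R \<union> Rs"] by blast
          then show ?thesis using a(1) by blast
        next
          case False
          then have "x \<in> Rs" using x by blast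
          then obtain a where a: "a \<in> A" "reach E Rs a x" using Rsreach by blast
          have "reach E (R \<union> Rs) a x" using reach_mono[OF a(2), of "R \<union> Rs"] by blast
          then show ?thesis using a(1) by blast
        qed
      qed
      then show ?thesis using that RsV by (auto simp: regs_def)
    qed
    have key: "R \<subseteq> Rs" if "R \<in> M" for R
    proof -
      have Rr: "R \<in> regs V E S D A" "fD V E D R = lam" using that by (auto simp: M_def)
      have "fD V E D (R \<union> Rs) + lam \<le> fD V E D R + fD V E D Rs"
        using Rr(1) RsV lb by (intro sub_lemma[OF fin]) (auto simp: regs_def)
      then have "fD V E D (R \<union> Rs) \<le> lam" using Rr Rsr by simp
      moreover have "lam \<le> fD V E D (R \<union> Rs)" using lam_le un_regs[OF Rr(1)] by blast
      ultimately have "R \<union> Rs \<in> M" using un_regs[OF Rr(1)] by (simp add: M_def)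
      then have cle: "card (R \<union> Rs) \<le> card Rs" by (rule cmax)
      have "R \<union> Rs \<subseteq> V" using un_regs[OF Rr(1)] by (simp add: regs_def)
      then have fU: "finite (R \<union> Rs)" by (rule finite_subset[OF _ fin])
      have "card Rs \<le> card (R \<union> Rs)" using fU by (rule card_mono) blast
      then have "card Rs = card (R \<union> Rs)" using cle by simp
      then have "Rs = R \<union> Rs" using card_subset_eq[OF fU, of Rs] by blast
      then show ?thesis by blast
    qed
    have key2: "Rs \<subseteq> R" if "R \<in> imp V E S D A p" for R
    proof -
      have Rr: "R \<in> regs V E S D A" and Rni: "\<not> (\<exists>R'\<in>regs V E S D A. R \<subset> R' \<and> fD V E D R' \<le> fD V E D R)"
        using that by (auto simp: imp_def)
      have "fD V E D (R \<union> Rs) + lam \<le> fD V E D R + fD V E D Rs"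
        using Rr RsV lb by (intro sub_lemma[OF fin]) (auto simp: regs_def)
      then have "fD V E D (R \<union> Rs) \<le> fD V E D R" using Rsr by simp
      then have "\<not> R \<subset> R \<union> Rs" using Rni un_regs[OF Rr] by blast
      then show ?thesis by blast
    qed
    show ?thesis
    proof (cases "nbh V E Rs - D = {}")
      case True
      have "imp V E S D A p \<subseteq> {Rs}"
      proof
        fix R assume RI: "R \<in> imp V E S D A p"
        have Rr: "R \<in> regs V E S D A" using RI by (auto simp: imp_def)
        have "R \<subseteq> Rs"
        proof
          fix x assume "x \<in> R"
          then obtain a where a: "a \<in> A" "reach E R a x" using Rr by (auto simp: regs_def)
          show "x \<in> Rs"
          proof (rule reach_closed[OF a(2)])
            show "a \<in> Rs" using a RsV by auto
          next
            fix a' b assume "a' \<in> Rs" "b \<in> R" "E a' b"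
            moreover have "b \<in> V" "b \<notin> D" using \<open>b \<in> R\<close> Rr by (auto simp: regs_def)
            ultimately show "b \<in> Rs" using True by (auto simp: nbh_def)
          qed
        qed
        then show "R \<in> {Rs}" using key2[OF RI] by auto
      qed
      then have "card (imp V E S D A p) \<le> card {Rs}" by (intro card_mono) simp_all
      then have c1: "card (imp V E S D A p) \<le> 1" by simp
      have "(1::nat) \<le> 4 ^ p" by simp
      with c1 have c4: "card (imp V E S D A p) \<le> 4 ^ p" by (rule order_trans)
      have "lam = 0" using Rsr True by (simp add: fD_def)
      then have "m = 0" using mlam by simp
      then show ?thesis using c4 by simp
    next
      case False
      then obtain u where u: "u \<in> nbh V E Rs" "u \<notin> D" by blast
      have uRs: "u \<notin> Rs" "u \<in> V" using u by (auto simp: nbh_def)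
      obtain w where w: "w \<in> Rs" "E w u" using u by (auto simp: nbh_def)
      have finN: "finite (nbh V E Rs - D)" using nbhD_fin[OF fin] nbh_fin[OF fin] by blast
      have lam1: "lam \<ge> 1" using Rsr False finN by (auto simp: fD_def card_gt_0_iff Suc_le_eq)
      have p1: "p \<ge> 1" using lam1 lamp by simp
      define A' where "A' = insert u A"
      define D' where "D' = insert u D"
      have fD_ins: "fD V E D R \<le> fD V E D' R + 1" for R
      proof -
        have "nbh V E R - D \<subseteq> insert u (nbh V E R - D')" by (auto simp: D'_def)
        moreover have "finite (nbh V E R - D')" using nbhD_fin[OF fin] nbh_fin[OF fin] by blast
        ultimately have "card (nbh V E R - D) \<le> card (insert u (nbh V E R - D'))"
          by (intro card_mono) auto
        also have "\<dots> \<le> card (nbh V E R - D') + 1"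
          using \<open>finite (nbh V E R - D')\<close> by (simp add: card_insert_if)
        finally show ?thesis by (simp add: fD_def)
      qed
      have split: "imp V E S D A p \<subseteq> imp V E S D A' p \<union> imp V E S D' A (p - 1)"
      proof
        fix R assume RI: "R \<in> imp V E S D A p"
        have Rr: "R \<in> regs V E S D A" and Rp: "fD V E D R \<le> p"
          and Rni: "\<not> (\<exists>R'\<in>regs V E S D A. R \<subset> R' \<and> fD V E D R' \<le> fD V E D R)"
          using RI by (auto simp: imp_def)
        have RsR: "Rs \<subseteq> R" using key2[OF RI] .
        have RV: "A \<subseteq> R" "R \<subseteq> V" "R \<inter> (S \<union> D) = {}"
          and Rreach: "\<forall>x\<in>R. \<exists>a\<in>A. reach E R a x" using Rr by (auto simp: regs_def)
        show "R \<in> imp V E S D A' p \<union> imp V E S D' A (p - 1)"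
        proof (cases "u \<in> R")
          case True
          have "A' \<subseteq> R" using RV(1) True unfolding A'_def by blast
          moreover have "\<forall>x\<in>R. \<exists>a\<in>A'. reach E R a x" using Rreach unfolding A'_def by blast
          ultimately have Rr': "R \<in> regs V E S D A'" using RV(2,3) unfolding regs_def by blast
          have "\<not> (\<exists>R'\<in>regs V E S D A'. R \<subset> R' \<and> fD V E D R' \<le> fD V E D R)"
          proof
            assume "\<exists>R'\<in>regs V E S D A'. R \<subset> R' \<and> fD V E D R' \<le> fD V E D R"
            then obtain R' where R': "R' \<in> regs V E S D A'" "R \<subset> R'" "fD V E D R' \<le> fD V E D R" by blast
            obtain au where au: "au \<in> A" "reach E R au u" using Rreach True by blast
            have "\<forall>x\<in>R'. \<exists>a\<in>A. reach E R' a x"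
            proof
              fix x assume "x \<in> R'"
              then obtain a where a: "a \<in> A'" "reach E R' a x" using R'(1) unfolding regs_def by blast
              show "\<exists>a\<in>A. reach E R' a x"
              proof (cases "a = u")
                case True
                have "R \<subseteq> R'" using R'(2) by blast
                then have "reach E R' au u" using reach_mono[OF au(2)] by blast
                then have "reach E R' au x" using a True reach_trans[of E R' au u x] by blast
                then show ?thesis using au by blast
              next
                case False then have "a \<in> A" using a(1) unfolding A'_def by blast
                then show ?thesis using a(2) by blast
              qed
            qed
            moreover have "A \<subseteq> R'" "R' \<subseteq> V" "R' \<inter> (S \<union> D) = {}" using R'(1) unfolding regs_def A'_def by blast+
            ultimately have "R' \<in> regs V E S D A" unfolding regs_def by blast
            then show False using Rni R' by blast
          qed
          then have "R \<in> imp V E S D A' p" using Rr' Rp by (simp add: imp_def)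
          then show ?thesis by blast
        next
          case False
          have uN: "u \<in> nbh V E R - D" using False w RsR uRs u by (auto simp: nbh_def)
          have finNR: "finite (nbh V E R - D)" using nbhD_fin[OF fin] nbh_fin[OF fin] by blast
          have fDeq: "fD V E D' R + 1 = fD V E D R"
          proof -
            have "nbh V E R - D' = (nbh V E R - D) - {u}" by (auto simp: D'_def)
            moreover have "card ((nbh V E R - D) - {u}) = card (nbh V E R - D) - 1"
              using uN by (rule card_Diff_singleton)
            moreover have "card (nbh V E R - D) > 0" using uN finNR card_gt_0_iff by blast
            ultimately show ?thesis unfolding fD_def by simp
          qed
          have "R \<inter> (S \<union> D') = {}" using RV(3) False unfolding D'_def by blast
          then have Rr': "R \<in> regs V E S D' A" using RV(1,2) Rreach unfolding regs_def by blast
          have "\<not> (\<exists>R'\<in>regs V E S D' A. R \<subset> R' \<and> fD V E D' R' \<le> fD V E D' R)"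
          proof
            assume "\<exists>R'\<in>regs V E S D' A. R \<subset> R' \<and> fD V E D' R' \<le> fD V E D' R"
            then obtain R' where R': "R' \<in> regs V E S D' A" "R \<subset> R'" "fD V E D' R' \<le> fD V E D' R" by blast
            have "R' \<in> regs V E S D A" using R'(1) unfolding regs_def D'_def by blast
            moreover have "fD V E D R' \<le> fD V E D R" using fD_ins[of R'] R'(3) fDeq by simp
            ultimately show False using Rni R'(2) by blast
          qed
          then have "R \<in> imp V E S D' A (p - 1)" using Rr' Rp fDeq by (simp add: imp_def)
          then show ?thesis by blast
        qed
      qed
      have lb1: "\<forall>R\<in>regs V E S D A'. lam + 1 \<le> fD V E D R"
      proof
        fix R assume Rr: "R \<in> regs V E S D A'"
        show "lam + 1 \<le> fD V E D R"
        proof (rule ccontr)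
          assume "\<not> lam + 1 \<le> fD V E D R"
          then have Rle: "fD V E D R \<le> lam" by simp
          have RV: "A' \<subseteq> R" "R \<subseteq> V" "R \<inter> (S \<union> D) = {}"
            and Rreach: "\<forall>x\<in>R. \<exists>a\<in>A'. reach E R a x" using Rr by (auto simp: regs_def)
          obtain aw where aw: "aw \<in> A" "reach E Rs aw w" using Rsreach w by blast
          have awu: "reach E (R \<union> Rs) aw u"
          proof -
            have r1: "reach E (R \<union> Rs) aw w" using aw reach_mono[of E Rs aw w "R \<union> Rs"] by blast
            have "u \<in> R \<union> Rs" using RV unfolding A'_def by blast
            then show ?thesis using reach_step[of E "R \<union> Rs" aw w u] r1 w(2) by blast
          qed
          have "\<forall>x\<in>R \<union> Rs. \<exists>a\<in>A. reach E (R \<union> Rs) a x"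
          proof
            fix x assume x: "x \<in> R \<union> Rs"
            show "\<exists>a\<in>A. reach E (R \<union> Rs) a x"
            proof (cases "x \<in> R")
              case True
              then obtain a where a: "a \<in> A'" "reach E R a x" using Rreach by blast
              then have a2: "reach E (R \<union> Rs) a x" using reach_mono[of E R a x "R \<union> Rs"] by blast
              show ?thesis
              proof (cases "a = u")
                case True then show ?thesis using reach_trans[of E "R \<union> Rs" aw u x] awu a2 aw by blast
              next
                case False then show ?thesis using a a2 by (auto simp: A'_def)
              qed
            next
              case False
              then have "x \<in> Rs" using x by blast
              then obtain a where "a \<in> A" "reach E Rs a x" using Rsreach by blast
              then show ?thesis using reach_mono[of E Rs a x "R \<union> Rs"] by blast
            qed
          qed
          then have UR: "R \<union> Rs \<in> regs V E S D A" using RV RsV by (auto simp: regs_def A'_def)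
          have "fD V E D (R \<union> Rs) + lam \<le> fD V E D R + fD V E D Rs"
            using RV RsV lb by (intro sub_lemma[OF fin]) (auto simp: A'_def)
          then have "fD V E D (R \<union> Rs) \<le> lam" using Rsr Rle by simp
          moreover have "lam \<le> fD V E D (R \<union> Rs)" using lam_le[OF UR] .
          ultimately have "R \<union> Rs \<in> M" using UR by (simp add: M_def)
          then have "R \<union> Rs \<subseteq> Rs" by (rule key)
          moreover have "u \<in> R" using RV by (auto simp: A'_def)
          ultimately show False using uRs by blast
        qed
      qed
      have lb2: "\<forall>R\<in>regs V E S D' A. lam - 1 \<le> fD V E D' R"
      proof
        fix R assume "R \<in> regs V E S D' A"
        then have "R \<in> regs V E S D A" by (auto simp: regs_def D'_def)
        then have "lam \<le> fD V E D R" by (rule lam_le)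
        then show "lam - 1 \<le> fD V E D' R" using fD_ins[of R] by simp
      qed
      have m1: "2 * p - (lam + 1) < 2 * p - m" using lamp p1 mlam by simp
      have m2: "2 * (p - 1) - (lam - 1) < 2 * p - m" using lamp p1 mlam lam1 by simp
      have c1: "card (imp V E S D A' p) * 2 ^ (lam + 1) \<le> 4 ^ p"
        using less.hyps[OF m1 lb1] .
      have c2: "card (imp V E S D' A (p - 1)) * 2 ^ (lam - 1) \<le> 4 ^ (p - 1)"
        using less.hyps[OF m2 lb2] .
      have "card (imp V E S D A p) \<le> card (imp V E S D A' p \<union> imp V E S D' A (p - 1))"
        using split imp_finite[OF fin] by (intro card_mono) auto
      also have "\<dots> \<le> card (imp V E S D A' p) + card (imp V E S D' A (p - 1))"
        by (rule card_Un_le)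
      finally have cs: "card (imp V E S D A p) \<le> card (imp V E S D A' p) + card (imp V E S D' A (p - 1))" .
      obtain l where l: "lam = Suc l" using lam1 by (cases lam) auto
      obtain q where q: "p = Suc q" using p1 by (cases p) auto
      let ?c1 = "card (imp V E S D A' p)" and ?c2 = "card (imp V E S D' A (p - 1))"
      have p4: "(4::nat) ^ p = 4 * 4 ^ q" using q by simp
      have "(2::nat) ^ (lam + 1) = 2 * 2 ^ lam" by simp
      then have e1: "2 * (?c1 * 2 ^ lam) \<le> 4 ^ p" using c1 by (simp add: mult_ac)
      have X: "?c2 * 2 ^ lam = 2 * (?c2 * 2 ^ l)" by (simp add: l algebra_simps)
      have c2': "?c2 * 2 ^ l \<le> 4 ^ q" using c2 l q by simp
      have e2: "?c2 * 2 ^ lam \<le> 2 * 4 ^ q" using X c2' by linarith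
      have "card (imp V E S D A p) * 2 ^ m \<le> card (imp V E S D A p) * 2 ^ lam"
        using mlam by (intro mult_le_mono2 power_increasing) auto
      also have "\<dots> \<le> (?c1 + ?c2) * 2 ^ lam" using cs by (intro mult_le_mono1)
      also have "\<dots> = ?c1 * 2 ^ lam + ?c2 * 2 ^ lam" by (rule add_mult_distrib)
      also have "\<dots> \<le> 4 ^ p" using e1 e2 p4 by linarith
      finally show ?thesis .
    qed
  qed
qed


lemma reach_outside_nbh:
  assumes "reach E (V - nbh V E R) x y" "x \<in> R"
  shows "y \<in> R"
proof (rule reach_closed[OF assms])
  fix a b assume "a \<in> R" "b \<in> V - nbh V E R" "E a b"
  then show "b \<in> R" by (auto simp: nbh_def)
qed

lemma chip_imp:
  assumes ch: "chip V E S k C'" and vC: "v \<in> C'"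
  shows "C' \<in> imp V E S {} {v} (3 * k)"
proof -
  have cs: "connected_set V E C'" and cN: "card (nbh V E C') \<le> 3 * k"
    and isep: "important_separator V E C' S (nbh V E C')" using ch by (auto simp: chip_def)
  have CV: "C' \<subseteq> V" and Creach: "\<forall>u\<in>C'. \<forall>w\<in>C'. reach E C' u w"
    using cs by (auto simp: connected_set_def)
  have sep: "\<not> (\<exists>x\<in>C'. \<exists>y\<in>S. reach E (V - nbh V E C') x y)"
    using isep by (auto simp: important_separator_def min_separator_def separator_def)
  have noimp: "\<not> (\<exists>W'. separator V E C' S W' \<and> card W' \<le> card (nbh V E C') \<and>
      reachable_set V E (nbh V E C') C' \<subset> reachable_set V E W' C')"
    using isep by (auto simp: important_separator_def)
  have CS: "C' \<inter> S = {}"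
  proof (rule ccontr)
    assume "C' \<inter> S \<noteq> {}"
    then obtain x where x: "x \<in> C'" "x \<in> S" by blast
    have "x \<in> V - nbh V E C'" using x CV by (auto simp: nbh_def)
    then have "reach E (V - nbh V E C') x x" by (rule reach_refl)
    then show False using sep x by blast
  qed
  have Cr: "C' \<in> regs V E S {} {v}" using vC CV CS Creach by (auto simp: regs_def)
  have "\<not> (\<exists>R'\<in>regs V E S {} {v}. C' \<subset> R' \<and> fD V E {} R' \<le> fD V E {} C')"
  proof
    assume "\<exists>R'\<in>regs V E S {} {v}. C' \<subset> R' \<and> fD V E {} R' \<le> fD V E {} C'"
    then obtain R' where R': "R' \<in> regs V E S {} {v}" "C' \<subset> R'" "fD V E {} R' \<le> fD V E {} C'" by blast
    have R'V: "R' \<subseteq> V" "R' \<inter> S = {}" and R'reach: "\<forall>x\<in>R'. reach E R' v x"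
      using R'(1) by (auto simp: regs_def)
    let ?W = "nbh V E R'"
    have "separator V E C' S ?W"
      unfolding separator_def
    proof
      show "?W \<subseteq> V" by (rule nbh_sub)
      show "\<not> (\<exists>x\<in>C'. \<exists>y\<in>S. reach E (V - ?W) x y)"
      proof
        assume "\<exists>x\<in>C'. \<exists>y\<in>S. reach E (V - ?W) x y"
        then obtain x y where "x \<in> C'" "y \<in> S" "reach E (V - ?W) x y" by blast
        then have "y \<in> R'" using R'(2) reach_outside_nbh[of E V R' x y] by blast
        then show False using \<open>y \<in> S\<close> R'V by blast
      qed
    qed
    moreover have "card ?W \<le> card (nbh V E C')" using R'(3) by (simp add: fD_def)
    moreover have "reachable_set V E (nbh V E C') C' \<subset> reachable_set V E ?W C'"
    proof -
      have "reachable_set V E (nbh V E C') C' \<subseteq> C'"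
        using reach_outside_nbh[of E V C'] by (auto simp: reachable_set_def)
      moreover have "R' \<subseteq> reachable_set V E ?W C'"
      proof
        fix y assume "y \<in> R'"
        then have "reach E R' v y" using R'reach by blast
        moreover have "R' \<subseteq> V - ?W" using R'V by (auto simp: nbh_def)
        ultimately have "reach E (V - ?W) v y" by (rule reach_mono)
        moreover have "v \<in> C' - ?W" using vC R'(2) by (auto simp: nbh_def)
        ultimately show "y \<in> reachable_set V E ?W C'" by (auto simp: reachable_set_def)
      qed
      ultimately show ?thesis using R'(2) by blast
    qed
    ultimately show False using noimp by blast
  qed
  moreover have "fD V E {} C' \<le> 3 * k" using cN by (simp add: fD_def)
  ultimately show ?thesis using Cr by (simp add: imp_def)
qed

lemma touch_nbh:
  assumes mc: "max_chip V E S k C" and mc': "max_chip V E S k C'" and t: "touch E C C'"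
  shows "\<exists>v\<in>nbh V E C. v \<in> C'"
proof -
  have chC: "chip V E S k C" and chC': "chip V E S k C'"
    and mx': "\<not> (\<exists>C''. chip V E S k C'' \<and> C' \<subset> C'')" using mc mc' by (auto simp: max_chip_def)
  have C'V: "C' \<subseteq> V" and C'reach: "\<forall>u\<in>C'. \<forall>w\<in>C'. reach E C' u w"
    using chC' by (auto simp: chip_def connected_set_def)
  have ne: "C \<noteq> C'" using t by (simp add: touch_def)
  show ?thesis
  proof (cases "C \<inter> C' = {}")
    case True
    then obtain u w where "u \<in> C" "w \<in> C'" "E u w" using t by (auto simp: touch_def)
    then have "w \<in> nbh V E C" using True C'V by (auto simp: nbh_def)
    then show ?thesis using \<open>w \<in> C'\<close> by blast
  next
    case False
    then obtain x where x: "x \<in> C" "x \<in> C'" by blast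
    show ?thesis
    proof (rule ccontr)
      assume nn: "\<not> (\<exists>v\<in>nbh V E C. v \<in> C')"
      have "C' \<subseteq> C"
      proof
        fix y assume "y \<in> C'"
        then have "reach E C' x y" using C'reach x by blast
        then show "y \<in> C"
        proof (rule reach_closed)
          show "x \<in> C" using x by simp
        next
          fix a b assume "a \<in> C" "b \<in> C'" "E a b"
          then show "b \<in> C" using nn C'V by (auto simp: nbh_def)
        qed
      qed
      then have "C' \<subset> C" using ne by blast
      then show False using mx' chC by blast
    qed
  qed
qed

theorem lemma3p7:
  fixes V :: "'a set" and E :: "'a \<Rightarrow> 'a \<Rightarrow> bool" and S :: "'a set" and k :: nat
  assumes "graph V E" and "S \<subseteq> V"
    and "max_chip V E S k C"
  shows "card {C'. max_chip V E S k C' \<and> touch E C C'} \<le> 3 * k * 4 ^ (3 * k)"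
proof -
  have fin: "finite V" using assms(1) by (simp add: graph_def)
  let ?N = "nbh V E C"
  have finN: "finite ?N" using nbhD_fin[OF fin] nbh_fin[OF fin] by blast
  have cN: "card ?N \<le> 3 * k" using assms(3) by (simp add: max_chip_def chip_def)
  have sub: "{C'. max_chip V E S k C' \<and> touch E C C'} \<subseteq> (\<Union>v\<in>?N. imp V E S {} {v} (3 * k))"
  proof
    fix C' assume "C' \<in> {C'. max_chip V E S k C' \<and> touch E C C'}"
    then have mc': "max_chip V E S k C'" and t: "touch E C C'" by auto
    obtain v where v: "v \<in> ?N" "v \<in> C'" using touch_nbh[OF assms(3) mc' t] by blast
    have "C' \<in> imp V E S {} {v} (3 * k)"
      using chip_imp[OF _ v(2)] mc' by (simp add: max_chip_def)
    then show "C' \<in> (\<Union>v\<in>?N. imp V E S {} {v} (3 * k))" using v(1) by blast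
  qed
  have each: "card (imp V E S {} {v} (3 * k)) \<le> 4 ^ (3 * k)" for v
    using main_bound[OF fin, of E S "{}" "{v}" 0 "3 * k"] by simp
  have "card {C'. max_chip V E S k C' \<and> touch E C C'} \<le> card (\<Union>v\<in>?N. imp V E S {} {v} (3 * k))"
    using sub finN imp_finite[OF fin] by (intro card_mono) auto
  also have "\<dots> \<le> (\<Sum>v\<in>?N. card (imp V E S {} {v} (3 * k)))" using finN by (rule card_UN_le)
  also have "\<dots> \<le> of_nat (card ?N) * 4 ^ (3 * k)"
    by (rule sum_bounded_above) (rule each)
  also have "\<dots> = card ?N * 4 ^ (3 * k)" by simp
  also have "\<dots> \<le> 3 * k * 4 ^ (3 * k)" using cN by simp
  finally show ?thesis .
qed

end
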